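(* Suppose $f\in\mathcal A_c$ with primitive $F\in\mathcal B_c$ such that the restriction $F|_I\in C^1(I)$ for some open interval $I\subset\mathbb R$ (so that on $I$, $f$ is the continuous function $F'(x)$, denoted $f(x)$). Define $u:\mathbb R\times[0,\infty)\to\mathbb R$ by $u(x,t)=f\ast\Theta_t(x)$ for $(x,t)\in\mathbb R\times(0,\infty)$, $u(x,0)=f(x)$ for $x\in I$, and $u(x,0)=0$ for $x\in\mathbb R\setminus I$. Then $u$ is continuous on $[\mathbb R\times(0,\infty)]\cup[I\times\{0\}]$.
   Context: Let $\mathcal B_c$ be the set of continuous $F:\mathbb R\to\mathbb R$ such that $\lim_{x\to\pm\infty}F(x)$ exist as real numbers and $\lim_{x\to-\infty}F(x)=0$. Let $\mathcal A_c$ be the set of distributions $f$ on $\mathbb R$ with $f=F'$ (distributional derivative) for some (unique) $F\in\mathcal B_c$, the primitive of $f$. The integral is $\int_a^bf=F(b)-F(a)$ for $a,b\in[-\infty,\infty]$. For $f\in\mathcal A_c$ and $h$ of bounded variation, $\int_{-\infty}^\infty fh:=F(\infty)h(\infty)-\int_{-\infty}^\infty F\,dh$ (Henstock–Stieltjes), and $f\ast h(x)=\int_{-\infty}^\infty f(\xi)h(x-\xi)\,d\xi$ in this sense. The heat kernel is $\Theta_t(x)=(4\pi t)^{-1/2}e^{-x^2/(4t)}$, $t>0$. *)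

theory Defs
  imports "HOL-Analysis.Analysis"
begin

definition heat_kernel :: "real \<Rightarrow> real \<Rightarrow> real" where
  "heat_kernel t x = exp (- (x\<^sup>2) / (4 * t)) / sqrt (4 * pi * t)"

definition in_Bc :: "(real \<Rightarrow> real) \<Rightarrow> bool" where
  "in_Bc F \<longleftrightarrow> continuous_on UNIV F \<and> (F \<longlongrightarrow> 0) at_bot \<and> (\<exists>L. (F \<longlongrightarrow> L) at_top)"

definition prim_top :: "(real \<Rightarrow> real) \<Rightarrow> real" where
  "prim_top F = Lim at_top F"

text \<open>The integral of f h, f = F' in A_c, for h of bounded variation:
  F(infinity) h(infinity) - int F dh.  For the (smooth) functions h used here
  the Henstock--Stieltjes integral int F dh is the integral of F h'.\<close>
definition Ac_integral_mult :: "(real \<Rightarrow> real) \<Rightarrow> (real \<Rightarrow> real) \<Rightarrow> real" where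
  "Ac_integral_mult F h =
     prim_top F * Lim at_top h - integral UNIV (\<lambda>\<xi>. F \<xi> * deriv h \<xi>)"

definition Ac_conv_heat :: "(real \<Rightarrow> real) \<Rightarrow> real \<Rightarrow> real \<Rightarrow> real" where
  "Ac_conv_heat F t x = Ac_integral_mult F (\<lambda>\<xi>. heat_kernel t (x - \<xi>))"

end

theory Submission imports Defs "HOL-Probability.Probability" "HOL-Real_Asymp.Real_Asymp" begin

definition phi :: "real \<Rightarrow> real" where
  "phi z = z * normal_density 0 (sqrt 2) z / 2"

lemma phi_has_int: "has_bochner_integral lborel phi 0"
proof -
  have "has_bochner_integral lborel (\<lambda>x. normal_density 0 (sqrt 2) x * (x - 0)^(2*0+1)) 0"
    by (rule normal_moment_odd) simp
  then have "has_bochner_integral lborel (\<lambda>x. (normal_density 0 (sqrt 2) x * (x - 0)^(2*0+1)) / 2) (0/2)"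
    by (rule has_bochner_integral_divide_zero)
  then show ?thesis unfolding phi_def by (simp add: mult.commute)
qed

lemma zphi_has_int: "has_bochner_integral lborel (\<lambda>z. z * phi z) 1"
proof -
  have "has_bochner_integral lborel (\<lambda>x. normal_density 0 (sqrt 2) x * (x - 0)^(2*1))
     (fact (2 * 1) / ((2 / (sqrt 2)\<^sup>2)^1 * fact 1))"
    by (rule normal_moment_even) simp
  then have "has_bochner_integral lborel (\<lambda>x. normal_density 0 (sqrt 2) x * (x - 0)^(2*1)) 2"
    by (simp add: fact_numeral)
  then have "has_bochner_integral lborel (\<lambda>x. (normal_density 0 (sqrt 2) x * (x - 0)^(2*1)) / 2) (2/2)"
    by (rule has_bochner_integral_divide_zero)
  moreover have "(\<lambda>z. z * phi z) = (\<lambda>x. normal_density 0 (sqrt 2) x * (x - 0)^(2*1) / 2)"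
    by (auto simp: phi_def fun_eq_iff power2_eq_square)
  ultimately show ?thesis by simp
qed

lemma phi_abs_int: "integrable lborel (\<lambda>z. \<bar>phi z\<bar>)"
proof -
  have "integrable lborel (\<lambda>x. normal_density 0 (sqrt 2) x * \<bar>x - 0\<bar>^1)"
    by (rule integrable_normal_moment_abs) simp
  then have "integrable lborel (\<lambda>x. (normal_density 0 (sqrt 2) x * \<bar>x - 0\<bar>^1) / 2)"
    by simp
  then show ?thesis unfolding phi_def by (simp add: abs_mult mult.commute)
qed

lemma zphi_nonneg: "z * phi z \<ge> 0"
  unfolding phi_def by (simp add: mult.assoc[symmetric])

lemma zphi_abs: "\<bar>z\<bar> * \<bar>phi z\<bar> = z * phi z"
  by (metis abs_mult abs_of_nonneg zphi_nonneg)

lemma phi_measurable[measurable]: "phi \<in> borel_measurable borel"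
  unfolding phi_def by measurable

lemma heat_deriv: "t > 0 \<Longrightarrow> ((\<lambda>\<xi>. exp (- ((x - \<xi>)\<^sup>2) / (4 * t)) / sqrt (4 * pi * t))
   has_real_derivative ((x - \<xi>) / (2*t) * (exp (- ((x - \<xi>)\<^sup>2) / (4 * t)) / sqrt (4 * pi * t)))) (at \<xi>)"
proof -
  assume t: "t > 0"
  have "((\<lambda>\<xi>. exp (- ((x - \<xi>)\<^sup>2) / (4 * t))) has_real_derivative
     exp (- ((x - \<xi>)\<^sup>2) / (4 * t)) * ((x - \<xi>) / (2*t))) (at \<xi>)"
    using t by (auto intro!: derivative_eq_intros simp: field_simps power2_eq_square)
  from DERIV_cdivide[OF this, of "sqrt (4 * pi * t)"] show ?thesis
    by (simp add: field_simps)
qed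

lemma u_repr:
  assumes Fc: "continuous_on UNIV F" and B: "\<forall>x. \<bar>F x\<bar> \<le> B" and t: "t > 0"
  shows "Ac_conv_heat F t x = (LINT z|lborel. F (x + sqrt t * z) * phi z) / sqrt t"
proof -
  define h where "h = (\<lambda>\<xi>. heat_kernel t (x - \<xi>))"
  have "(h \<longlongrightarrow> 0) at_top"
    unfolding h_def heat_kernel_def using t by real_asymp
  then have Lh: "Lim at_top h = 0" by (rule tendsto_Lim[rotated]) simp
  have dh: "deriv h \<xi> = (x - \<xi>) / (2*t) * h \<xi>" for \<xi>
    unfolding h_def heat_kernel_def by (rule DERIV_imp_deriv[OF heat_deriv[OF t]])
  define g where "g = (\<lambda>\<xi>. F \<xi> * ((x - \<xi>) / (2*t) * h \<xi>))"
  have Fm[measurable]: "F \<in> borel_measurable borel"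
    using Fc by (rule borel_measurable_continuous_onI)
  have key: "g (x + sqrt t * z) = - (F (x + sqrt t * z) * phi z) / t" for z
  proof -
    have e: "(sqrt t * z)\<^sup>2 = t * z\<^sup>2" using t by (simp add: power_mult_distrib)
    have s: "sqrt (4 * pi * t) = sqrt (2 * pi * 2) * sqrt t"
      by (simp add: real_sqrt_mult[symmetric])
    have s2: "sqrt (pi * (t * 4)) = sqrt t * sqrt (pi * 4)"
      by (simp add: real_sqrt_mult[symmetric] ac_simps)
    show ?thesis
      unfolding g_def h_def heat_kernel_def phi_def normal_density_def
      using t by (simp add: e s field_simps s2)
  qed
  have int1: "integrable lborel (\<lambda>z. F (x + sqrt t * z) * phi z)"
  proof (rule Bochner_Integration.integrable_bound)
    show "integrable lborel (\<lambda>z. B * \<bar>phi z\<bar>)" using phi_abs_int by simp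
    show "(\<lambda>z. F (x + sqrt t * z) * phi z) \<in> borel_measurable lborel" by measurable
    show "AE z in lborel. norm (F (x + sqrt t * z) * phi z) \<le> norm (B * \<bar>phi z\<bar>)"
    proof (rule AE_I2)
      fix z
      have "\<bar>F (x + sqrt t * z)\<bar> \<le> \<bar>B\<bar>" using B by (meson abs_ge_self order_trans)
      then show "norm (F (x + sqrt t * z) * phi z) \<le> norm (B * \<bar>phi z\<bar>)"
        by (simp add: abs_mult mult_right_mono)
    qed
  qed
  have int2: "integrable lborel (\<lambda>z. g (x + sqrt t * z))"
    unfolding key using int1 by simp
  have intg: "integrable lborel g"
    using int2 lborel_integrable_real_affine_iff[of "sqrt t" g x] t by simp
  have "integral UNIV g = integral\<^sup>L lborel g"
    using has_integral_integral_lborel[OF intg] by (rule integral_unique)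
  also have "\<dots> = sqrt t * (LINT z|lborel. g (x + sqrt t * z))"
    using lborel_integral_real_affine[of "sqrt t" g x] t by simp
  also have "\<dots> = - (LINT z|lborel. F (x + sqrt t * z) * phi z) / sqrt t"
    unfolding key using t by (simp add: field_simps real_sqrt_mult[symmetric])
  finally have ig: "integral UNIV g = - (LINT z|lborel. F (x + sqrt t * z) * phi z) / sqrt t" .
  have "(\<lambda>\<xi>. F \<xi> * deriv h \<xi>) = g" unfolding g_def dh by simp
  then show ?thesis
    unfolding Ac_conv_heat_def Ac_integral_mult_def h_def[symmetric] Lh using ig by simp
qed

lemma F_bounded:
  assumes "in_Bc F" shows "\<exists>B. \<forall>x. \<bar>F x\<bar> \<le> B"
proof -
  from assms have Fc: "continuous_on UNIV F" and bot: "(F \<longlongrightarrow> 0) at_bot"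
    and "\<exists>L. (F \<longlongrightarrow> L) at_top" unfolding in_Bc_def by auto
  then obtain L where top: "(F \<longlongrightarrow> L) at_top" by auto
  have "eventually (\<lambda>x. dist (F x) 0 < 1) at_bot" using bot by (rule tendstoD) simp
  then obtain a where a: "\<And>x. x \<le> a \<Longrightarrow> \<bar>F x\<bar> < 1"
    by (auto simp: eventually_at_bot_linorder dist_real_def)
  have "eventually (\<lambda>x. dist (F x) L < 1) at_top" using top by (rule tendstoD) simp
  then obtain b where b: "\<And>x. x \<ge> b \<Longrightarrow> \<bar>F x - L\<bar> < 1"
    by (auto simp: eventually_at_top_linorder dist_real_def)
  have "compact (F ` {a..b})"
    by (rule compact_continuous_image) (auto intro: continuous_on_subset[OF Fc])
  then obtain C where C: "\<And>y. y \<in> F ` {a..b} \<Longrightarrow> norm y \<le> C"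
    by (meson bounded_iff compact_imp_bounded)
  have "\<bar>F x\<bar> \<le> max C (max 1 (\<bar>L\<bar> + 1))" for x
  proof (cases "x \<le> a")
    case True then show ?thesis using a[of x] by auto
  next
    case False
    show ?thesis
    proof (cases "x \<ge> b")
      case True then show ?thesis using b[of x] by auto
    next
      case False
      with \<open>\<not> x \<le> a\<close> have "x \<in> {a..b}" by auto
      then show ?thesis using C[of "F x"] by auto
    qed
  qed
  then show ?thesis by blast
qed

lemma dct_ev:
  fixes s :: "nat \<Rightarrow> real \<Rightarrow> real"
  assumes "\<And>n. s n \<in> borel_measurable lborel" "f \<in> borel_measurable lborel"
    "integrable lborel w" "\<And>z. (\<lambda>n. s n z) \<longlonglongrightarrow> f z"
    "eventually (\<lambda>n. \<forall>z. \<bar>s n z\<bar> \<le> w z) sequentially"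
  shows "(\<lambda>n. LINT z|lborel. s n z) \<longlonglongrightarrow> (LINT z|lborel. f z)"
proof -
  from assms(5) obtain N where N: "\<And>n. n \<ge> N \<Longrightarrow> \<forall>z. \<bar>s n z\<bar> \<le> w z"
    by (auto simp: eventually_sequentially)
  show ?thesis
  proof (rule LIMSEQ_offset[where k=N], rule integral_dominated_convergence[where w=w])
    show "AE z in lborel. norm (s (n + N) z) \<le> w z" for n using N[of "n+N"] by auto
    show "AE z in lborel. (\<lambda>n. s (n + N) z) \<longlonglongrightarrow> f z"
      using assms(4) by (intro AE_I2) (rule LIMSEQ_ignore_initial_segment)
  qed (use assms in auto)
qed

lemma mvt_I:
  fixes F :: "real \<Rightarrow> real"
  assumes "\<forall>x\<in>I. F differentiable (at x)" "{min a b..max a b} \<subseteq> I"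
  shows "\<exists>c. min a b \<le> c \<and> c \<le> max a b \<and> F b - F a = deriv F c * (b - a)"
proof -
  have D: "DERIV F x :> deriv F x" if "x \<in> {min a b..max a b}" for x
    using assms that by (auto simp: DERIV_deriv_iff_real_differentiable)
  consider "a < b" | "a = b" | "b < a" by linarith
  then show ?thesis
  proof cases
    case 1
    then obtain c where "a < c" "c < b" "F b - F a = (b - a) * deriv F c"
      using MVT2[of a b F "deriv F"] D by auto
    then show ?thesis using 1 by (auto simp: mult.commute intro!: exI[of _ c])
  next
    case 2 then show ?thesis by auto
  next
    case 3
    then obtain c where "b < c" "c < a" "F a - F b = (a - b) * deriv F c"
      using MVT2[of b a F "deriv F"] D by auto
    then show ?thesis using 3 by (auto simp: algebra_simps intro!: exI[of _ c])
  qed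
qed

lemma int_Fphi:
  assumes Fc: "continuous_on UNIV F" and B: "\<forall>x. \<bar>F x\<bar> \<le> B"
  shows "integrable lborel (\<lambda>z. F (x + c * z) * phi z)"
proof (rule Bochner_Integration.integrable_bound)
  have Fm[measurable]: "F \<in> borel_measurable borel"
    using Fc by (rule borel_measurable_continuous_onI)
  show "integrable lborel (\<lambda>z. B * \<bar>phi z\<bar>)" using phi_abs_int by simp
  show "(\<lambda>z. F (x + c * z) * phi z) \<in> borel_measurable lborel" by measurable
  show "AE z in lborel. norm (F (x + c * z) * phi z) \<le> norm (B * \<bar>phi z\<bar>)"
  proof (rule AE_I2)
    fix z
    have "\<bar>F (x + c * z)\<bar> \<le> \<bar>B\<bar>" using B by (meson abs_ge_self order_trans)
    then show "norm (F (x + c * z) * phi z) \<le> norm (B * \<bar>phi z\<bar>)"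
      by (simp add: abs_mult mult_right_mono)
  qed
qed

theorem theorem3p5:
  fixes F :: "real \<Rightarrow> real" and I :: "real set" and u :: "real \<times> real \<Rightarrow> real"
  assumes F_Bc: "in_Bc F"
    and I_open: "open I" and I_interval: "is_interval I"
    and F_diff: "\<forall>x\<in>I. F differentiable (at x)"
    and F_C1: "continuous_on I (deriv F)"
    and u_pos: "\<forall>x t. t > 0 \<longrightarrow> u (x, t) = Ac_conv_heat F t x"
    and u_zero: "\<forall>x. u (x, 0) = (if x \<in> I then deriv F x else 0)"
  shows "continuous_on ({p. snd p > 0} \<union> (I \<times> {0})) u"
proof -
  define S where "S = {p::real\<times>real. snd p > 0} \<union> (I \<times> {0})"
  have Fc: "continuous_on UNIV F" using F_Bc unfolding in_Bc_def by auto
  have Fm[measurable]: "F \<in> borel_measurable borel"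
    using Fc by (rule borel_measurable_continuous_onI)
  have Fcont: "isCont F y" for y using Fc by (simp add: continuous_on_eq_continuous_at)
  obtain B where B: "\<forall>x. \<bar>F x\<bar> \<le> B" using F_bounded[OF F_Bc] by auto
  have B0: "B \<ge> 0" using B[rule_format, of 0] by simp
  define Q where "Q = (\<lambda>(p::real\<times>real) z. if snd p = 0 then deriv F (fst p) * z
      else (F (fst p + sqrt (snd p) * z) - F (fst p)) / sqrt (snd p))"
  define K where "K = (\<lambda>p z. Q p z * phi z)"
  have Km: "K p \<in> borel_measurable lborel" for p
  proof (cases "snd p = 0")
    case True
    then have "K p = (\<lambda>z. deriv F (fst p) * z * phi z)" by (simp add: K_def Q_def fun_eq_iff)
    then show ?thesis by simp
  next
    case False
    then have "K p = (\<lambda>z. (F (fst p + sqrt (snd p) * z) - F (fst p)) / sqrt (snd p) * phi z)"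
      by (simp add: K_def Q_def fun_eq_iff)
    then show ?thesis by simp
  qed
  have repr: "u p = (LINT z|lborel. K p z)" if "p \<in> S" for p
  proof (cases "snd p = 0")
    case True
    with that have "fst p \<in> I" by (auto simp: S_def)
    have pe: "p = (fst p, 0)" using True by (simp add: prod_eq_iff)
    have "u p = deriv F (fst p)" using u_zero \<open>fst p \<in> I\<close> by (subst pe) simp
    also have "\<dots> = deriv F (fst p) * (LINT z|lborel. z * phi z)"
      using has_bochner_integral_integral_eq[OF zphi_has_int] by simp
    also have "\<dots> = (LINT z|lborel. K p z)"
      unfolding K_def Q_def using True by (simp add: mult.assoc)
    finally show ?thesis .
  next
    case False
    with that have t: "snd p > 0" by (auto simp: S_def)
    have "u p = (LINT z|lborel. F (fst p + sqrt (snd p) * z) * phi z) / sqrt (snd p)"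
    proof -
      have "u p = u (fst p, snd p)" by simp
      also have "\<dots> = Ac_conv_heat F (snd p) (fst p)" using u_pos t by blast
      finally show ?thesis using u_repr[OF Fc B t] by simp
    qed
    also have "\<dots> = (LINT z|lborel. F (fst p + sqrt (snd p) * z) * phi z / sqrt (snd p)
        - F (fst p) / sqrt (snd p) * phi z)"
    proof -
      have i1: "integrable lborel (\<lambda>z. F (fst p + sqrt (snd p) * z) * phi z / sqrt (snd p))"
        using int_Fphi[OF Fc B] by simp
      have i2: "integrable lborel (\<lambda>z. F (fst p) / sqrt (snd p) * phi z)"
        using phi_has_int by (simp add: has_bochner_integral_iff)
      have z: "(LINT z|lborel. phi z) = 0"
        using phi_has_int by (simp add: has_bochner_integral_iff)
      show ?thesis
        by (subst Bochner_Integration.integral_diff[OF i1 i2]) (simp add: z)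
    qed
    also have "\<dots> = (LINT z|lborel. K p z)"
      unfolding K_def Q_def using False by (simp add: diff_divide_distrib left_diff_distrib)
    finally show ?thesis .
  qed
  show ?thesis
    unfolding S_def[symmetric]
  proof (rule continuous_on_sequentiallyI)
    fix p :: "nat \<Rightarrow> real \<times> real" and p0
    assume pS: "\<forall>n. p n \<in> S" and p0S: "p0 \<in> S" and lim: "p \<longlonglongrightarrow> p0"
    obtain x0 t0 where p0: "p0 = (x0, t0)" by force
    have limx: "(\<lambda>n. fst (p n)) \<longlonglongrightarrow> x0" using tendsto_fst[OF lim] p0 by simp
    have limt: "(\<lambda>n. snd (p n)) \<longlonglongrightarrow> t0" using tendsto_snd[OF lim] p0 by simp
    have tn0: "snd (p n) \<ge> 0" for n using pS[rule_format, of n] by (auto simp: S_def)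
    have "(\<lambda>n. LINT z|lborel. K (p n) z) \<longlonglongrightarrow> (LINT z|lborel. K p0 z)"
    proof (cases "t0 = 0")
      case False
      with p0S p0 have t0: "t0 > 0" by (auto simp: S_def)
      have evt: "eventually (\<lambda>n. snd (p n) > t0 / 2) sequentially"
        using order_tendstoD(1)[OF limt, of "t0/2"] t0 by linarith
      show ?thesis
      proof (rule dct_ev[where w="\<lambda>z. 2 * B / sqrt (t0/2) * \<bar>phi z\<bar>"])
        show "K (p n) \<in> borel_measurable lborel" for n by (rule Km)
        show "K p0 \<in> borel_measurable lborel" by (rule Km)
        show "integrable lborel (\<lambda>z. 2 * B / sqrt (t0/2) * \<bar>phi z\<bar>)"
          using phi_abs_int by simp
        show "(\<lambda>n. K (p n) z) \<longlonglongrightarrow> K p0 z" for z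
        proof -
          have "(\<lambda>n. (F (fst (p n) + sqrt (snd (p n)) * z) - F (fst (p n))) / sqrt (snd (p n)) * phi z)
              \<longlonglongrightarrow> (F (x0 + sqrt t0 * z) - F x0) / sqrt t0 * phi z"
            by (intro tendsto_intros isCont_tendsto_compose[OF Fcont] limx limt) (use t0 in auto)
          moreover have "eventually (\<lambda>n. (F (fst (p n) + sqrt (snd (p n)) * z) - F (fst (p n))) / sqrt (snd (p n)) * phi z
              = K (p n) z) sequentially"
            using evt by eventually_elim (use t0 in \<open>auto simp: K_def Q_def\<close>)
          ultimately show ?thesis using t0 p0
            by (auto simp: K_def Q_def elim: Lim_transform_eventually)
        qed
        show "eventually (\<lambda>n. \<forall>z. \<bar>K (p n) z\<bar> \<le> 2 * B / sqrt (t0/2) * \<bar>phi z\<bar>) sequentially"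
          using evt
        proof eventually_elim
          case (elim n)
          show ?case
          proof
            fix z
            let ?x = "fst (p n)" and ?t = "snd (p n)"
            have tp: "?t > 0" using elim t0 by linarith
            have "\<bar>F (?x + sqrt ?t * z) - F ?x\<bar> \<le> 2 * B"
              using B[rule_format, of "?x + sqrt ?t * z"] B[rule_format, of ?x] by linarith
            moreover have "sqrt (t0/2) \<le> sqrt ?t" using elim by simp
            moreover have "sqrt (t0/2) > 0" using t0 by simp
            ultimately have "\<bar>F (?x + sqrt ?t * z) - F ?x\<bar> / sqrt ?t \<le> 2 * B / sqrt (t0/2)"
              by (intro frac_le) (use B0 in auto)
            then have le: "\<bar>F (?x + sqrt ?t * z) - F ?x\<bar> / sqrt ?t * \<bar>phi z\<bar> \<le> 2 * B / sqrt (t0/2) * \<bar>phi z\<bar>"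
              by (rule mult_right_mono) simp
            have "\<bar>K (p n) z\<bar> = \<bar>F (?x + sqrt ?t * z) - F ?x\<bar> / sqrt ?t * \<bar>phi z\<bar>"
              using tp by (simp add: K_def Q_def abs_mult)
            with le show "\<bar>K (p n) z\<bar> \<le> 2 * B / sqrt (t0/2) * \<bar>phi z\<bar>" by simp
          qed
        qed
      qed
    next
      case True
      with p0S p0 have x0I: "x0 \<in> I" and p0e: "p0 = (x0, 0)" by (auto simp: S_def)
      obtain e where e: "e > 0" "ball x0 e \<subseteq> I" using I_open x0I openE by blast
      define \<delta> where "\<delta> = e / 4"
      have d0: "\<delta> > 0" using e by (simp add: \<delta>_def)
      have cb: "cball x0 (2*\<delta>) \<subseteq> I" using e by (auto simp: \<delta>_def)
      have "compact (deriv F ` cball x0 (2*\<delta>))"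
        by (rule compact_continuous_image) (auto intro: continuous_on_subset[OF F_C1 cb])
      then have "bounded (deriv F ` cball x0 (2*\<delta>))" by (rule compact_imp_bounded)
      then obtain M where M': "\<forall>y\<in>deriv F ` cball x0 (2*\<delta>). norm y \<le> M"
        unfolding bounded_iff by blast
      have M: "\<bar>deriv F c\<bar> \<le> M" if "c \<in> cball x0 (2*\<delta>)" for c
        using M' that by auto
      have M0: "M \<ge> 0" using M[of x0] d0 by auto
      have dcont: "isCont (deriv F) x0"
        using F_C1 I_open x0I by (simp add: continuous_on_eq_continuous_at)
      have mv: "\<exists>c. \<bar>c - x0\<bar> \<le> \<bar>x - x0\<bar> + sqrt t * \<bar>z\<bar> \<and> Q (x,t) z = deriv F c * z"
        if "t \<ge> 0" "\<bar>x - x0\<bar> < \<delta>" "sqrt t * \<bar>z\<bar> < \<delta>" for x t z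
      proof (cases "t = 0")
        case True then show ?thesis by (auto simp: Q_def intro!: exI[of _ x])
      next
        case False
        with that have tp: "t > 0" by simp
        let ?b = "x + sqrt t * z"
        have "{min x ?b..max x ?b} \<subseteq> cball x0 (2*\<delta>)"
        proof
          fix y assume "y \<in> {min x ?b..max x ?b}"
          then have "\<bar>y - x\<bar> \<le> \<bar>?b - x\<bar>" by (cases "x \<le> ?b") (auto simp: min_def max_def)
          then have "\<bar>y - x\<bar> \<le> sqrt t * \<bar>z\<bar>" using tp by (simp add: abs_mult)
          then show "y \<in> cball x0 (2*\<delta>)" using that by (auto simp: dist_real_def)
        qed
        with cb obtain c where c: "min x ?b \<le> c" "c \<le> max x ?b" "F ?b - F x = deriv F c * (?b - x)"
          using mvt_I[OF F_diff, of x ?b] by blast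
        have "\<bar>c - x\<bar> \<le> \<bar>?b - x\<bar>" using c(1,2) by (cases "x \<le> ?b") (auto simp: min_def max_def)
        then have "\<bar>c - x\<bar> \<le> sqrt t * \<bar>z\<bar>" using tp by (simp add: abs_mult)
        then have "\<bar>c - x0\<bar> \<le> \<bar>x - x0\<bar> + sqrt t * \<bar>z\<bar>" by linarith
        moreover have "Q (x,t) z = deriv F c * z" using c(3) tp by (simp add: Q_def)
        ultimately show ?thesis by blast
      qed
      have limt0: "(\<lambda>n. snd (p n)) \<longlonglongrightarrow> 0" using limt True by simp
      have evx: "eventually (\<lambda>n. \<bar>fst (p n) - x0\<bar> < \<delta>) sequentially"
        using tendstoD[OF limx d0] by (simp add: dist_real_def)
      show ?thesis
      proof (rule dct_ev[where w="\<lambda>z. (M + 2*B/\<delta>) * (z * phi z)"])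
        show "K (p n) \<in> borel_measurable lborel" for n by (rule Km)
        show "K p0 \<in> borel_measurable lborel" by (rule Km)
        show "integrable lborel (\<lambda>z. (M + 2*B/\<delta>) * (z * phi z))"
          using zphi_has_int by (simp add: has_bochner_integral_iff)
        show "(\<lambda>n. K (p n) z) \<longlonglongrightarrow> K p0 z" for z
        proof -
          have sq: "(\<lambda>n. \<bar>fst (p n) - x0\<bar> + sqrt (snd (p n)) * \<bar>z\<bar>) \<longlonglongrightarrow> \<bar>x0 - x0\<bar> + sqrt 0 * \<bar>z\<bar>"
            by (intro tendsto_intros limx limt0)
          then have sq0: "(\<lambda>n. \<bar>fst (p n) - x0\<bar> + sqrt (snd (p n)) * \<bar>z\<bar>) \<longlonglongrightarrow> 0" by simp
          have "(\<lambda>n. sqrt (snd (p n)) * \<bar>z\<bar>) \<longlonglongrightarrow> sqrt 0 * \<bar>z\<bar>"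
            by (intro tendsto_intros limt0)
          then have evz: "eventually (\<lambda>n. sqrt (snd (p n)) * \<bar>z\<bar> < \<delta>) sequentially"
            using order_tendstoD(2) d0 by simp
          define P where "P = (\<lambda>n c. \<bar>c - x0\<bar> \<le> \<bar>fst (p n) - x0\<bar> + sqrt (snd (p n)) * \<bar>z\<bar>
              \<and> Q (p n) z = deriv F c * z)"
          define c where "c = (\<lambda>n. SOME c. P n c)"
          have evc: "eventually (\<lambda>n. P n (c n)) sequentially"
            using evx evz
          proof eventually_elim
            case (elim n)
            have "\<exists>c. P n c" unfolding P_def using mv[OF tn0 elim] by simp
            then show ?case unfolding c_def by (rule someI_ex)
          qed
          have "(\<lambda>n. c n - x0) \<longlonglongrightarrow> 0"
          proof (rule Lim_null_comparison[OF _ sq0])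
            show "eventually (\<lambda>n. norm (c n - x0) \<le> \<bar>fst (p n) - x0\<bar> + sqrt (snd (p n)) * \<bar>z\<bar>) sequentially"
              using evc by eventually_elim (simp add: P_def)
          qed
          then have "c \<longlonglongrightarrow> x0" by (simp add: LIM_zero_iff)
          then have "(\<lambda>n. deriv F (c n) * z * phi z) \<longlonglongrightarrow> deriv F x0 * z * phi z"
            by (intro tendsto_intros isCont_tendsto_compose[OF dcont])
          moreover have "eventually (\<lambda>n. deriv F (c n) * z * phi z = K (p n) z) sequentially"
            using evc by eventually_elim (simp add: P_def K_def)
          ultimately show ?thesis using p0e
            by (auto simp: K_def Q_def elim: Lim_transform_eventually)
        qed
        show "eventually (\<lambda>n. \<forall>z. \<bar>K (p n) z\<bar> \<le> (M + 2*B/\<delta>) * (z * phi z)) sequentially"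
          using evx
        proof eventually_elim
          case (elim n)
          show ?case
          proof
            fix z
            let ?x = "fst (p n)" and ?t = "snd (p n)"
            have pn: "p n = (?x, ?t)" by simp
            have Qb: "\<bar>Q (p n) z\<bar> \<le> (M + 2*B/\<delta>) * \<bar>z\<bar>"
            proof (cases "sqrt ?t * \<bar>z\<bar> < \<delta>")
              case True
              then obtain c where c: "\<bar>c - x0\<bar> \<le> \<bar>?x - x0\<bar> + sqrt ?t * \<bar>z\<bar>"
                "Q (?x, ?t) z = deriv F c * z"
                using mv[OF tn0 elim] by blast
              have "c \<in> cball x0 (2*\<delta>)" using c(1) elim True by (auto simp: dist_real_def)
              then have "\<bar>deriv F c\<bar> \<le> M" by (rule M)
              then have "\<bar>Q (p n) z\<bar> \<le> M * \<bar>z\<bar>"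
                using c(2) pn by (metis abs_ge_zero abs_mult mult_right_mono)
              also have "\<dots> \<le> (M + 2*B/\<delta>) * \<bar>z\<bar>"
                using B0 d0 by (intro mult_right_mono) auto
              finally show ?thesis .
            next
              case False
              then have tp: "?t > 0" using d0 tn0[of n] by (cases "?t = 0") auto
              have st: "sqrt ?t > 0" using tp by simp
              have dz: "\<delta> \<le> sqrt ?t * \<bar>z\<bar>" using False by simp
              have "\<bar>F (?x + sqrt ?t * z) - F ?x\<bar> \<le> 2 * B"
                using B[rule_format, of "?x + sqrt ?t * z"] B[rule_format, of ?x] by linarith
              then have "\<bar>Q (p n) z\<bar> \<le> 2 * B / sqrt ?t"
                using tp st by (simp add: Q_def abs_divide divide_right_mono)
              also have "\<dots> \<le> 2 * B * \<bar>z\<bar> / \<delta>"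
              proof -
                have "2 * B * \<delta> \<le> 2 * B * (sqrt ?t * \<bar>z\<bar>)"
                  using dz B0 by (intro mult_left_mono) auto
                then show ?thesis using st d0 by (simp add: field_simps)
              qed
              also have "\<dots> \<le> (M + 2*B/\<delta>) * \<bar>z\<bar>"
                using M0 by (simp add: algebra_simps)
              finally show ?thesis .
            qed
            have "\<bar>K (p n) z\<bar> = \<bar>Q (p n) z\<bar> * \<bar>phi z\<bar>" by (simp add: K_def abs_mult)
            also have "\<dots> \<le> (M + 2*B/\<delta>) * \<bar>z\<bar> * \<bar>phi z\<bar>"
              using Qb by (rule mult_right_mono) simp
            also have "\<dots> = (M + 2*B/\<delta>) * (z * phi z)"
              using zphi_abs[of z] by (simp add: mult.assoc)
            finally show "\<bar>K (p n) z\<bar> \<le> (M + 2*B/\<delta>) * (z * phi z)" .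
          qed
        qed
      qed
    qed
    then show "(\<lambda>n. u (p n)) \<longlonglongrightarrow> u p0"
      using repr pS p0S by simp
  qed
qed

end
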